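(* For every $T>0$, $$\sup_{t\in[-\tau,T]}|Y^N(t)-Y^N(t^-)|\to0$$ in probability as $N\to\infty$, where $Y^N(t^-)$ denotes the left limit.
   Context: Model. Fix $\tau>0$, $\mu\ge 0$, $N\in\mathbb N$, and write $L=\lfloor \tau N\rfloor$. The state space is $\Omega_N=[0,\infty)^{L+1}$, with elements $x=(x_{-L},\dots,x_0)$. Define $\theta_N^\pm:\Omega_N\to\Omega_N$ by $(\theta_N^\pm x)_j=x_{j+1}$ for $-L\le j<0$, $(\theta_N^+x)_0=x_0(1+\frac1N)$, $(\theta_N^-x)_0=\max\{x_0(1-\frac{x_{-L}}{N^2}),0\}$. Let $\xi^N=(\xi^N(n))_{n\ge0}$ be the discrete-time Markov chain on $\Omega_N$ moving from $x$ to $\theta_N^+x$ or $\theta_N^-x$ with probability $1/2$ each, with $\xi^N_j(0)=\mu N$ for all $j$. Let $(\sigma_n)_{n\ge1}$ be i.i.d. Exp(1), independent of $\xi^N$, $J_0=0$, $J_n=\sigma_1+\dots+\sigma_n$, and $X^N(t)=\xi^N(n)$ for $t\in[J_n,J_{n+1})$. Define $Y^N(t)=X^N_{-L}(N(t+\tau))/N$ for $t\in[-\tau,0)$ and $Y^N(t)=X^N_0(Nt)/N$ for $t\ge0$. *)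

theory Defs
  imports "HOL-Probability.Probability"
begin

definition Lval :: "real \<Rightarrow> nat \<Rightarrow> nat" where
  "Lval \<tau> N = nat \<lfloor>\<tau> * real N\<rfloor>"

(* States x = (x_{-L},...,x_0) are represented as int \<Rightarrow> real; only indices -L..0 matter. *)
definition theta_plus :: "nat \<Rightarrow> nat \<Rightarrow> (int \<Rightarrow> real) \<Rightarrow> (int \<Rightarrow> real)" where
  "theta_plus L N x = (\<lambda>j. if - int L \<le> j \<and> j < 0 then x (j + 1)
      else if j = 0 then x 0 * (1 + 1 / real N) else x j)"

definition theta_minus :: "nat \<Rightarrow> nat \<Rightarrow> (int \<Rightarrow> real) \<Rightarrow> (int \<Rightarrow> real)" where
  "theta_minus L N x = (\<lambda>j. if - int L \<le> j \<and> j < 0 then x (j + 1)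
      else if j = 0 then max (x 0 * (1 - x (- int L) / (real N)^2)) 0 else x j)"

primrec xi :: "real \<Rightarrow> real \<Rightarrow> nat \<Rightarrow> (nat \<Rightarrow> bool) \<Rightarrow> nat \<Rightarrow> (int \<Rightarrow> real)" where
  "xi \<tau> \<mu> N c 0 = (\<lambda>j. \<mu> * real N)"
| "xi \<tau> \<mu> N c (Suc n) =
     (if c n then theta_plus (Lval \<tau> N) N (xi \<tau> \<mu> N c n)
      else theta_minus (Lval \<tau> N) N (xi \<tau> \<mu> N c n))"

(* J_k = sigma_1 + ... + sigma_k, with sigma_{i+1} = s i *)
definition Jt :: "(nat \<Rightarrow> real) \<Rightarrow> nat \<Rightarrow> real" where
  "Jt s k = (\<Sum>i<k. s i)"

(* X^N(t) = xi^N(n) for t in [J_n, J_{n+1}); n = #{k \<ge> 1. J_k \<le> t} *)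
definition Xproc :: "real \<Rightarrow> real \<Rightarrow> nat \<Rightarrow> (nat \<Rightarrow> bool) \<Rightarrow> (nat \<Rightarrow> real) \<Rightarrow> real \<Rightarrow> (int \<Rightarrow> real)" where
  "Xproc \<tau> \<mu> N c s t = xi \<tau> \<mu> N c (card {k. 1 \<le> k \<and> Jt s k \<le> t})"

definition Yproc :: "real \<Rightarrow> real \<Rightarrow> nat \<Rightarrow> (nat \<Rightarrow> bool) \<Rightarrow> (nat \<Rightarrow> real) \<Rightarrow> real \<Rightarrow> real" where
  "Yproc \<tau> \<mu> N c s t =
     (if t < 0 then Xproc \<tau> \<mu> N c s (real N * (t + \<tau>)) (- int (Lval \<tau> N)) / real N
      else Xproc \<tau> \<mu> N c s (real N * t) 0 / real N)"

definition jump_size :: "(real \<Rightarrow> real) \<Rightarrow> real \<Rightarrow> real" where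
  "jump_size f t = \<bar>f t - Lim (at_left t) f\<bar>"

end

theory Submission
  imports Defs
begin

definition Sle :: "(nat \<Rightarrow> real) \<Rightarrow> real \<Rightarrow> nat set" where
  "Sle J x = {k. 1 \<le> k \<and> J k \<le> x}"
definition Slt :: "(nat \<Rightarrow> real) \<Rightarrow> real \<Rightarrow> nat set" where
  "Slt J x = {k. 1 \<le> k \<and> J k < x}"
definition Rc :: "(nat \<Rightarrow> real) \<Rightarrow> real \<Rightarrow> nat \<Rightarrow> bool" where
  "Rc J u n = ((\<exists>q::rat. of_rat q < u \<and> card (Sle J (of_rat q)) = n) \<or>
               (\<exists>k. 1 \<le> k \<and> J k < u \<and> card (Sle J (J k)) = n))"
definition nx :: "(nat \<Rightarrow> real) \<Rightarrow> real \<Rightarrow> nat \<Rightarrow> nat" where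
  "nx J u m = (LEAST n. Rc J u n \<and> m \<le> n)"
definition LLf :: "(nat \<Rightarrow> real) \<Rightarrow> (nat \<Rightarrow> real) \<Rightarrow> real \<Rightarrow> real \<Rightarrow> real" where
  "LLf J v N u = (if finite (Slt J u) then v (card (Slt J u)) / N
     else if (\<exists>q::rat. of_rat q < u \<and> infinite (Sle J (of_rat q))) then v 0 / N
     else lim (\<lambda>m. v (nx J u m) / N))"

lemma Sle_mono: "x \<le> y \<Longrightarrow> Sle J x \<subseteq> Sle J y"
  by (auto simp: Sle_def)

lemma Sle_sub_Slt: "x < y \<Longrightarrow> Sle J x \<subseteq> Slt J y"
  by (auto simp: Sle_def Slt_def)

lemma rat_between:
  fixes x y :: real assumes "x < y" shows "\<exists>q::rat. x < of_rat q \<and> of_rat q < y"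
  using of_rat_dense[OF assms] by blast

lemma case_a:
  assumes fin: "finite (Slt J u)"
  shows "((\<lambda>x. v (card (Sle J x))) \<longlongrightarrow> v (card (Slt J u))) (at_left u)"
proof -
  define m where "m = (if Slt J u = {} then u - 1 else Max (J ` Slt J u))"
  have mu: "m < u"
  proof (cases "Slt J u = {}")
    case False
    then have "Max (J ` Slt J u) \<in> J ` Slt J u" using fin by (intro Max_in) auto
    then show ?thesis using False by (auto simp: m_def Slt_def)
  qed (simp add: m_def)
  have ev: "eventually (\<lambda>x. x \<in> {m<..<u}) (at_left u)"
    using eventually_at_left_real[OF mu] .
  have "eventually (\<lambda>x. v (card (Sle J x)) = v (card (Slt J u))) (at_left u)"
    using ev
  proof eventually_elim
    case (elim x)
    have "Sle J x = Slt J u"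
    proof
      show "Sle J x \<subseteq> Slt J u" using elim by (intro Sle_sub_Slt) auto
      show "Slt J u \<subseteq> Sle J x"
      proof
        fix k assume k: "k \<in> Slt J u"
        then have "Slt J u \<noteq> {}" by auto
        then have "J k \<le> m" using k fin by (auto simp: m_def)
        then show "k \<in> Sle J x" using k elim by (auto simp: Sle_def Slt_def)
      qed
    qed
    then show ?case by simp
  qed
  then show ?thesis by (rule tendsto_eventually)
qed

lemma case_b:
  assumes "x0 < u" "infinite (Sle J x0)"
  shows "((\<lambda>x. v (card (Sle J x))) \<longlongrightarrow> v 0) (at_left u)"
proof -
  have "eventually (\<lambda>x. v (card (Sle J x)) = v 0) (at_left u)"
    using eventually_at_left_real[OF assms(1)]
  proof eventually_elim
    case (elim x)
    then have "Sle J x0 \<subseteq> Sle J x" by (intro Sle_mono) auto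
    then have "infinite (Sle J x)" using assms(2) finite_subset by blast
    then show ?case by simp
  qed
  then show ?thesis by (rule tendsto_eventually)
qed


lemma case_c2:
  fixes v :: "nat \<Rightarrow> real"
  assumes inf: "infinite (Slt J u)" and fin: "\<And>x. x < u \<Longrightarrow> finite (Sle J x)"
  shows "((\<lambda>x. v (card (Sle J x))) \<longlongrightarrow> l) (at_left u) \<longleftrightarrow> ((\<lambda>m. v (nx J u m)) \<longlonglongrightarrow> l)"
proof -
  define K where "K x = card (Sle J x)" for x
  have Kmono: "K x \<le> K y" if "x \<le> y" "y < u" for x y
    unfolding K_def using that fin by (intro card_mono Sle_mono) auto
  have R1: "\<exists>x<u. K x = n" if "Rc J u n" for n
    using that unfolding Rc_def K_def by auto
  have R2: "Rc J u (K x)" if "x < u" for x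
  proof (cases "Sle J x = {}")
    case True
    obtain q :: rat where q: "x - 1 < of_rat q" "of_rat q < x" using rat_between[of "x - 1" x] by auto
    have "Sle J (of_rat q) \<subseteq> Sle J x" using q by (intro Sle_mono) auto
    then have "Sle J (of_rat q) = {}" using True by auto
    then show ?thesis using True q that unfolding Rc_def K_def by (intro disjI1 exI[of _ q]) auto
  next
    case False
    have fx: "finite (Sle J x)" using fin that .
    have "Max (J ` Sle J x) \<in> J ` Sle J x" using False fx by (intro Max_in) auto
    then obtain k where k: "k \<in> Sle J x" "J k = Max (J ` Sle J x)" by auto
    have "Sle J (J k) = Sle J x"
    proof
      show "Sle J (J k) \<subseteq> Sle J x" using k by (intro Sle_mono) (auto simp: Sle_def)
      show "Sle J x \<subseteq> Sle J (J k)"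
        using k fx by (auto simp: Sle_def)
    qed
    then show ?thesis using k that unfolding Rc_def K_def
      by (intro disjI2 exI[of _ k]) (auto simp: Sle_def)
  qed
  have R3: "\<exists>x<u. B < K x" for B
  proof -
    obtain F where F: "F \<subseteq> Slt J u" "finite F" "card F = Suc B"
      using infinite_arbitrarily_large[OF inf] by blast
    then have Fne: "F \<noteq> {}" by auto
    define x where "x = Max (J ` F)"
    have "x \<in> J ` F" unfolding x_def using F Fne by (intro Max_in) auto
    then have xu: "x < u" using F by (auto simp: Slt_def)
    have "F \<subseteq> Sle J x" using F by (auto simp: Sle_def Slt_def x_def)
    then have "card F \<le> K x" unfolding K_def using fin[OF xu] by (intro card_mono) auto
    then show ?thesis using xu F by auto
  qed
  have ex: "\<exists>n. Rc J u n \<and> m \<le> n" for m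
  proof -
    obtain x where "x < u" "m < K x" using R3 by blast
    then show ?thesis using R2 by (intro exI[of _ "K x"]) auto
  qed
  have nx1: "Rc J u (nx J u m) \<and> m \<le> nx J u m" for m
    unfolding nx_def using ex[of m] by (rule LeastI_ex)
  have nx2: "nx J u n = n" if "Rc J u n" for n
    unfolding nx_def using that by (intro Least_equality) auto
  show ?thesis
  proof
    assume lim: "((\<lambda>x. v (card (Sle J x))) \<longlongrightarrow> l) (at_left u)"
    define z where "z m = (SOME x. x < u \<and> K x = nx J u m)" for m
    have z: "z m < u \<and> K (z m) = nx J u m" for m
      unfolding z_def using R1[OF nx1[THEN conjunct1]] by (rule someI_ex)
    have "filterlim z (at_left u) sequentially"
    proof (subst filterlim_at, intro conjI)
      show "eventually (\<lambda>m. z m \<in> {..<u} \<and> z m \<noteq> u) sequentially"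
        using z by (auto intro!: always_eventually simp: less_imp_neq)
      show "z \<longlonglongrightarrow> u"
        unfolding tendsto_iff eventually_sequentially
      proof (intro allI impI)
        fix e :: real assume e: "0 < e"
        show "\<exists>M. \<forall>m\<ge>M. dist (z m) u < e"
        proof (intro exI[of _ "Suc (K (u - e))"] allI impI)
          fix m assume m: "Suc (K (u - e)) \<le> m"
          have "u - e < z m"
          proof (rule ccontr)
            assume "\<not> u - e < z m"
            then have "K (z m) \<le> K (u - e)" using e by (intro Kmono) auto
            then show False using z[of m] nx1[of m] m by auto
          qed
          then show "dist (z m) u < e" using z[of m] by (auto simp: dist_real_def)
        qed
      qed
    qed
    from filterlim_compose[OF lim this]
    have "((\<lambda>m. v (card (Sle J (z m)))) \<longlonglongrightarrow> l)" .
    then show "(\<lambda>m. v (nx J u m)) \<longlonglongrightarrow> l"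
      using z by (simp add: K_def)
  next
    assume lim: "(\<lambda>m. v (nx J u m)) \<longlonglongrightarrow> l"
    show "((\<lambda>x. v (card (Sle J x))) \<longlongrightarrow> l) (at_left u)"
    proof (rule tendstoI)
      fix e :: real assume e: "0 < e"
      obtain M where M: "\<And>m. M \<le> m \<Longrightarrow> dist (v (nx J u m)) l < e"
        using lim e unfolding tendsto_iff eventually_sequentially by blast
      obtain x0 where x0: "x0 < u" "M < K x0" using R3 by blast
      show "\<forall>\<^sub>F x in at_left u. dist (v (card (Sle J x))) l < e"
        using eventually_at_left_real[OF x0(1)]
      proof eventually_elim
        case (elim x)
        then have "K x0 \<le> K x" by (intro Kmono) auto
        moreover have "nx J u (K x) = K x" using R2[of x] elim by (intro nx2) auto
        ultimately show ?case using M[of "K x"] x0 by (auto simp: K_def)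
      qed
    qed
  qed
qed


lemma the_tendsto_eq:
  fixes f :: "real \<Rightarrow> real"
  assumes "(f \<longlongrightarrow> a) (at_left u)" "N > 0"
  shows "(THE l. (f \<longlongrightarrow> N * l) (at_left u)) = a / N"
proof (rule the_equality)
  show "(f \<longlongrightarrow> N * (a / N)) (at_left u)" using assms by simp
  fix l assume "(f \<longlongrightarrow> N * l) (at_left u)"
  then have "N * l = a" using assms(1) by (intro tendsto_unique[OF trivial_limit_at_left_real])
  then show "l = a / N" using assms(2) by (auto simp: field_simps)
qed

lemma LLf_correct:
  fixes v :: "nat \<Rightarrow> real"
  assumes N: "N > 0"
  shows "(THE l. ((\<lambda>x. v (card (Sle J x))) \<longlongrightarrow> N * l) (at_left u)) = LLf J v N u"
proof (cases "finite (Slt J u)")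
  case True
  then show ?thesis unfolding LLf_def using the_tendsto_eq[OF case_a[OF True] N] by simp
next
  case False
  note F = False
  show ?thesis
  proof (cases "\<exists>q::rat. of_rat q < u \<and> infinite (Sle J (of_rat q))")
    case True
    then obtain q :: rat where q: "of_rat q < u" "infinite (Sle J (of_rat q))" by blast
    show ?thesis unfolding LLf_def using F True the_tendsto_eq[OF case_b[OF q] N] by simp
  next
    case False
    have fin: "finite (Sle J x)" if xu: "x < u" for x
    proof -
      obtain q :: rat where q: "x < of_rat q" "of_rat q < u" using rat_between[OF xu] by auto
      then have "finite (Sle J (of_rat q))" using False by auto
      moreover have "Sle J x \<subseteq> Sle J (of_rat q)" using q by (intro Sle_mono) auto
      ultimately show ?thesis by (rule finite_subset[rotated])
    qed
    have eq: "((\<lambda>x. v (card (Sle J x))) \<longlongrightarrow> N * l) (at_left u) \<longleftrightarrow>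
              ((\<lambda>m. v (nx J u m) / N) \<longlonglongrightarrow> l)" for l
    proof -
      have "((\<lambda>x. v (card (Sle J x))) \<longlongrightarrow> N * l) (at_left u) \<longleftrightarrow>
            ((\<lambda>m. v (nx J u m)) \<longlonglongrightarrow> N * l)"
        using case_c2[OF F fin] by blast
      also have "\<dots> \<longleftrightarrow> ((\<lambda>m. v (nx J u m) / N) \<longlonglongrightarrow> l)"
      proof
        assume "(\<lambda>m. v (nx J u m)) \<longlonglongrightarrow> N * l"
        from tendsto_divide[OF this tendsto_const[of N]] show "(\<lambda>m. v (nx J u m) / N) \<longlonglongrightarrow> l"
          using N by simp
      next
        assume "(\<lambda>m. v (nx J u m) / N) \<longlonglongrightarrow> l"
        from tendsto_mult[OF tendsto_const[of N] this] show "(\<lambda>m. v (nx J u m)) \<longlonglongrightarrow> N * l"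
          using N by simp
      qed
      finally show ?thesis .
    qed
    have "LLf J v N u = lim (\<lambda>m. v (nx J u m) / N)" unfolding LLf_def using F False by auto
    then show ?thesis unfolding lim_def Lim_def using eq by simp
  qed
qed

lemma ev_left: "eventually (\<lambda>x. x < (t::real)) (at_left t)"
proof -
  have "t - 1 < t" by simp
  from eventually_at_left_real[OF this] show ?thesis by (rule eventually_mono) auto
qed

lemma filterlim_affine_at_left:
  fixes a b t :: real assumes a: "a > 0"
  shows "filterlim (\<lambda>s. a * s + b) (at_left (a * t + b)) (at_left t)"
proof (subst filterlim_at, intro conjI)
  show "\<forall>\<^sub>F x in at_left t. a * x + b \<in> {..<a * t + b} \<and> a * x + b \<noteq> a * t + b"
    using ev_left[of t] by eventually_elim (use a in auto)
  have "((\<lambda>s. a * s + b) \<longlongrightarrow> a * t + b) (at t)"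
    by (intro tendsto_intros)
  then show "((\<lambda>s. a * s + b) \<longlongrightarrow> a * t + b) (at_left t)"
    by (rule tendsto_mono[rotated]) (simp add: at_le)
qed

lemma tendsto_affine_at_left_iff:
  fixes h :: "real \<Rightarrow> real" and a b t :: real assumes a: "a > 0"
  shows "((\<lambda>s. h (a * s + b)) \<longlongrightarrow> m) (at_left t) \<longleftrightarrow> (h \<longlongrightarrow> m) (at_left (a * t + b))"
proof
  assume "(h \<longlongrightarrow> m) (at_left (a * t + b))"
  from filterlim_compose[OF this filterlim_affine_at_left[OF a]]
  show "((\<lambda>s. h (a * s + b)) \<longlongrightarrow> m) (at_left t)" .
next
  assume H: "((\<lambda>s. h (a * s + b)) \<longlongrightarrow> m) (at_left t)"
  have inv: "filterlim (\<lambda>x. (1/a) * x + (- b / a)) (at_left ((1/a) * (a * t + b) + (- b / a))) (at_left (a * t + b))"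
    using a by (intro filterlim_affine_at_left) auto
  have "(1/a) * (a * t + b) + (- b / a) = t" using a by (simp add: field_simps)
  with inv have "filterlim (\<lambda>x. (1/a) * x + (- b / a)) (at_left t) (at_left (a * t + b))" by simp
  from filterlim_compose[OF H this]
  have "((\<lambda>x. h (a * ((1/a) * x + (- b / a)) + b)) \<longlongrightarrow> m) (at_left (a * t + b))" .
  moreover have "a * ((1/a) * x + (- b / a)) + b = x" for x using a by (simp add: field_simps)
  ultimately show "(h \<longlongrightarrow> m) (at_left (a * t + b))" by simp
qed

lemma tendsto_div_iff:
  fixes f :: "'a \<Rightarrow> real" assumes "N > 0"
  shows "((\<lambda>x. f x / N) \<longlongrightarrow> l) F \<longleftrightarrow> (f \<longlongrightarrow> N * l) F"
proof
  assume "((\<lambda>x. f x / N) \<longlongrightarrow> l) F"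
  from tendsto_mult[OF tendsto_const[of N] this] show "(f \<longlongrightarrow> N * l) F" using assms by simp
next
  assume "(f \<longlongrightarrow> N * l) F"
  from tendsto_divide[OF this tendsto_const[of N]] show "((\<lambda>x. f x / N) \<longlongrightarrow> l) F" using assms by simp
qed

lemma Yproc_eq:
  "Yproc \<tau> \<mu> N c s t = (if t < 0
     then xi \<tau> \<mu> N c (card (Sle (Jt s) (real N * t + real N * \<tau>))) (- int (Lval \<tau> N)) / real N
     else xi \<tau> \<mu> N c (card (Sle (Jt s) (real N * t + 0))) 0 / real N)"
  unfolding Yproc_def Xproc_def Sle_def by (simp add: algebra_simps)

definition vA where "vA \<tau> \<mu> N c n = xi \<tau> \<mu> N c n (- int (Lval \<tau> N))"
definition vB where "vB \<tau> \<mu> N c n = xi \<tau> \<mu> N c n 0"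

lemma Lim_Yproc:
  assumes N: "N > 0"
  shows "Lim (at_left t) (Yproc \<tau> \<mu> N c s) = (if t \<le> 0
     then LLf (Jt s) (vA \<tau> \<mu> N c) (real N) (real N * t + real N * \<tau>)
     else LLf (Jt s) (vB \<tau> \<mu> N c) (real N) (real N * t + 0))"
proof -
  have NN: "real N > 0" using N by simp
  show ?thesis
  proof (cases "t \<le> 0")
    case True
    have ev: "\<forall>\<^sub>F x in at_left t. Yproc \<tau> \<mu> N c s x =
        vA \<tau> \<mu> N c (card (Sle (Jt s) (real N * x + real N * \<tau>))) / real N"
      using ev_left[of t] by eventually_elim (use True in \<open>auto simp: Yproc_eq vA_def\<close>)
    have "(Yproc \<tau> \<mu> N c s \<longlongrightarrow> l) (at_left t) \<longleftrightarrow>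
      ((\<lambda>x. vA \<tau> \<mu> N c (card (Sle (Jt s) x))) \<longlongrightarrow> real N * l) (at_left (real N * t + real N * \<tau>))" for l
    proof -
      have "(Yproc \<tau> \<mu> N c s \<longlongrightarrow> l) (at_left t) \<longleftrightarrow>
        ((\<lambda>x. vA \<tau> \<mu> N c (card (Sle (Jt s) (real N * x + real N * \<tau>))) / real N) \<longlongrightarrow> l) (at_left t)"
        by (rule tendsto_cong[OF ev])
      also have "\<dots> \<longleftrightarrow> ((\<lambda>x. vA \<tau> \<mu> N c (card (Sle (Jt s) (real N * x + real N * \<tau>)))) \<longlongrightarrow> real N * l) (at_left t)"
        by (rule tendsto_div_iff[OF NN])
      also have "\<dots> \<longleftrightarrow> ((\<lambda>x. vA \<tau> \<mu> N c (card (Sle (Jt s) x))) \<longlongrightarrow> real N * l) (at_left (real N * t + real N * \<tau>))"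
        by (rule tendsto_affine_at_left_iff[OF NN, where h = "\<lambda>x. vA \<tau> \<mu> N c (card (Sle (Jt s) x))"])
      finally show ?thesis .
    qed
    then show ?thesis using True
      using LLf_correct[OF NN, of "vA \<tau> \<mu> N c" "Jt s" "real N * t + real N * \<tau>"] by (simp add: t2_space_class.Lim_def)
  next
    case False
    have ev: "\<forall>\<^sub>F x in at_left t. Yproc \<tau> \<mu> N c s x =
        vB \<tau> \<mu> N c (card (Sle (Jt s) (real N * x + 0))) / real N"
    proof -
      have "0 < t" using False by simp
      from eventually_at_left_real[OF this] show ?thesis
        by (rule eventually_mono) (auto simp: Yproc_eq vB_def)
    qed
    have "(Yproc \<tau> \<mu> N c s \<longlongrightarrow> l) (at_left t) \<longleftrightarrow>
      ((\<lambda>x. vB \<tau> \<mu> N c (card (Sle (Jt s) x))) \<longlongrightarrow> real N * l) (at_left (real N * t + 0))" for l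
    proof -
      have "(Yproc \<tau> \<mu> N c s \<longlongrightarrow> l) (at_left t) \<longleftrightarrow>
        ((\<lambda>x. vB \<tau> \<mu> N c (card (Sle (Jt s) (real N * x + 0))) / real N) \<longlongrightarrow> l) (at_left t)"
        by (rule tendsto_cong[OF ev])
      also have "\<dots> \<longleftrightarrow> ((\<lambda>x. vB \<tau> \<mu> N c (card (Sle (Jt s) (real N * x + 0)))) \<longlongrightarrow> real N * l) (at_left t)"
        by (rule tendsto_div_iff[OF NN])
      also have "\<dots> \<longleftrightarrow> ((\<lambda>x. vB \<tau> \<mu> N c (card (Sle (Jt s) x))) \<longlongrightarrow> real N * l) (at_left (real N * t + 0))"
        by (rule tendsto_affine_at_left_iff[OF NN, where h = "\<lambda>x. vB \<tau> \<mu> N c (card (Sle (Jt s) x))"])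
      finally show ?thesis .
    qed
    then show ?thesis using False
      using LLf_correct[OF NN, of "vB \<tau> \<mu> N c" "Jt s" "real N * t + 0"] by (simp add: t2_space_class.Lim_def)
  qed
qed

lemma pred_finite_Collect[measurable (raw)]:
  assumes [measurable]: "\<And>k. Measurable.pred M (P k)"
  shows "Measurable.pred M (\<lambda>x. finite {k::nat. P k x})"
proof -
  have eq: "(\<lambda>x. finite {k::nat. P k x}) = (\<lambda>x. \<exists>B. \<forall>k. B \<le> k \<longrightarrow> \<not> P k x)"
  proof (intro ext iffI)
    fix x assume "finite {k. P k x}"
    then obtain B where "\<forall>k\<in>{k. P k x}. k < B" using finite_nat_bounded by blast
    then show "\<exists>B. \<forall>k. B \<le> k \<longrightarrow> \<not> P k x" by (auto intro!: exI[of _ B])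
  next
    fix x assume "\<exists>B. \<forall>k. B \<le> k \<longrightarrow> \<not> P k x"
    then obtain B where "\<forall>k. B \<le> k \<longrightarrow> \<not> P k x" by blast
    then have "{k. P k x} \<subseteq> {..<B}" by (auto simp: not_le[symmetric])
    then show "finite {k. P k x}" by (rule finite_subset) auto
  qed
  show ?thesis unfolding eq by measurable
qed

lemma measurable_card_Collect[measurable (raw)]:
  assumes [measurable]: "\<And>k. Measurable.pred M (P k)"
  shows "(\<lambda>x. card {k::nat. P k x}) \<in> M \<rightarrow>\<^sub>M count_space UNIV"
proof (subst measurable_count_space_eq2_countable, intro conjI ballI)
  fix n :: nat assume "n \<in> UNIV"
  define FF where "FF = {F :: nat set. finite F \<and> card F = n}"
  have cFF: "countable FF" unfolding FF_def
    by (rule countable_subset[OF _ countable_Collect_finite]) auto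
  have eq: "(\<lambda>x. card {k. P k x}) -` {n} \<inter> space M =
     {x\<in>space M. n = 0 \<and> infinite {k. P k x}} \<union> (\<Union>F\<in>FF. {x\<in>space M. \<forall>k. P k x \<longleftrightarrow> k \<in> F})"
  proof (intro set_eqI iffI)
    fix x assume x: "x \<in> (\<lambda>x. card {k. P k x}) -` {n} \<inter> space M"
    show "x \<in> {x\<in>space M. n = 0 \<and> infinite {k. P k x}} \<union> (\<Union>F\<in>FF. {x\<in>space M. \<forall>k. P k x \<longleftrightarrow> k \<in> F})"
    proof (cases "finite {k. P k x}")
      case True
      then have "{k. P k x} \<in> FF" using x by (auto simp: FF_def)
      then show ?thesis using x by auto
    next
      case False
      then show ?thesis using x by auto
    qed
  next
    fix x assume "x \<in> {x\<in>space M. n = 0 \<and> infinite {k. P k x}} \<union> (\<Union>F\<in>FF. {x\<in>space M. \<forall>k. P k x \<longleftrightarrow> k \<in> F})"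
    then show "x \<in> (\<lambda>x. card {k. P k x}) -` {n} \<inter> space M"
    proof
      assume "x \<in> {x\<in>space M. n = 0 \<and> infinite {k. P k x}}" then show ?thesis by auto
    next
      assume "x \<in> (\<Union>F\<in>FF. {x\<in>space M. \<forall>k. P k x \<longleftrightarrow> k \<in> F})"
      then obtain F where F: "F \<in> FF" "x \<in> space M" "\<forall>k. P k x \<longleftrightarrow> k \<in> F" by auto
      then have "{k. P k x} = F" by auto
      then show ?thesis using F by (auto simp: FF_def)
    qed
  qed
  have "{x\<in>space M. n = 0 \<and> infinite {k. P k x}} \<in> sets M" by measurable
  moreover have "(\<Union>F\<in>FF. {x\<in>space M. \<forall>k. P k x \<longleftrightarrow> k \<in> F}) \<in> sets M"
    using cFF by (intro sets.countable_UN') auto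
  ultimately show "(\<lambda>x. card {k. P k x}) -` {n} \<inter> space M \<in> sets M" unfolding eq by auto
qed simp


lemma measurable_xi[measurable]:
  fixes c :: "nat \<Rightarrow> 'w \<Rightarrow> bool"
  assumes [measurable]: "\<And>n. Measurable.pred M (c n)"
  shows "(\<lambda>\<omega>. xi \<tau> \<mu> N (\<lambda>n. c n \<omega>) i j) \<in> borel_measurable M"
proof (induction i arbitrary: j)
  case 0 then show ?case by simp
next
  case (Suc i)
  note [measurable] = Suc
  show ?case unfolding xi.simps if_distrib[of "\<lambda>f. f j"] theta_plus_def theta_minus_def by measurable
qed

lemma measurable_comp_nat:
  fixes g :: "'a \<Rightarrow> nat"
  assumes f: "\<And>i. (\<lambda>x. f x i) \<in> borel_measurable M" and g: "g \<in> M \<rightarrow>\<^sub>M count_space UNIV"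
  shows "(\<lambda>x. f x (g x) :: real) \<in> borel_measurable M"
  by (rule measurable_compose_countable'[where I=UNIV, OF f g]) auto

lemma measurable_LLf:
  fixes J :: "'a \<Rightarrow> nat \<Rightarrow> real" and v :: "'a \<Rightarrow> nat \<Rightarrow> real" and u :: "'a \<Rightarrow> real"
  assumes J[measurable]: "\<And>k. (\<lambda>x. J x k) \<in> borel_measurable M"
    and v[measurable]: "\<And>n. (\<lambda>x. v x n) \<in> borel_measurable M"
    and u[measurable]: "u \<in> borel_measurable M"
  shows "(\<lambda>x. LLf (J x) (v x) N (u x)) \<in> borel_measurable M"
proof -
  have c0: "(\<lambda>x. card (Slt (J x) (u x))) \<in> M \<rightarrow>\<^sub>M count_space UNIV"
    unfolding Slt_def by measurable
  have c1: "(\<lambda>x. v x (card (Slt (J x) (u x))) / N) \<in> borel_measurable M"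
    apply (rule borel_measurable_divide)
    apply (rule measurable_comp_nat[OF v c0])
    by simp
  have Rc[measurable]: "Measurable.pred M (\<lambda>x. Rc (J x) (u x) n)" for n
    unfolding Rc_def Sle_def by measurable
  have nx: "(\<lambda>x. nx (J x) (u x) m) \<in> M \<rightarrow>\<^sub>M count_space UNIV" for m
    unfolding nx_def by (rule measurable_Least) measurable
  have c3: "(\<lambda>x. lim (\<lambda>m. v x (nx (J x) (u x) m) / N)) \<in> borel_measurable M"
    apply (rule borel_measurable_lim_metric)
    apply (rule borel_measurable_divide)
    apply (rule measurable_comp_nat[OF v nx])
    by simp
  show ?thesis
    unfolding LLf_def
    apply (rule measurable_If[OF c1])
     apply (rule measurable_If)
       apply (rule borel_measurable_divide) apply (rule v) apply simp
      apply (rule c3)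
    unfolding Sle_def Slt_def by measurable
qed

definition ustar :: "(nat \<Rightarrow> real) \<Rightarrow> real" where
  "ustar J = real_of_ereal (INF q::rat. if infinite (Sle J (of_rat q)) then ereal (of_rat q) else \<infinity>)"

lemma measurable_ustar:
  fixes J :: "'a \<Rightarrow> nat \<Rightarrow> real"
  assumes J[measurable]: "\<And>k. (\<lambda>x. J x k) \<in> borel_measurable M"
  shows "(\<lambda>x. ustar (J x)) \<in> borel_measurable M"
proof -
  have "(\<lambda>x. INF q::rat. if infinite (Sle (J x) (of_rat q)) then ereal (of_rat q) else \<infinity>) \<in> borel_measurable M"
    unfolding Sle_def by (intro borel_measurable_INF) measurable
  then show ?thesis unfolding ustar_def by measurable
qed

lemma ustar_eq:
  assumes inf: "infinite (Slt J u)" and fin: "\<forall>q::rat. of_rat q < u \<longrightarrow> finite (Sle J (of_rat q))"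
  shows "ustar J = u"
proof -
  let ?f = "\<lambda>q::rat. if infinite (Sle J (of_rat q)) then ereal (of_rat q) else \<infinity>"
  have "(INF q. ?f q) = ereal u"
  proof (rule antisym)
    show "ereal u \<le> (INF q. ?f q)"
    proof (rule INF_greatest)
      fix q :: rat
      show "ereal u \<le> ?f q"
      proof (cases "of_rat q < u")
        case True
        then have "finite (Sle J (of_rat q))" using fin by blast
        then show ?thesis by simp
      next
        case False
        then show ?thesis by simp
      qed
    qed
    show "(INF q. ?f q) \<le> ereal u"
    proof (rule dense_ge)
      fix y assume y: "ereal u < y"
      show "(INF q. ?f q) \<le> y"
      proof (cases y)
        case (real r)
        then have "u < r" using y by auto
        then obtain q :: rat where q: "u < of_rat q" "of_rat q < r" using of_rat_dense by blast
        have "Slt J u \<subseteq> Sle J (of_rat q)" using q by (auto simp: Slt_def Sle_def)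
        then have "infinite (Sle J (of_rat q))" using inf finite_subset by blast
        then have "?f q = ereal (of_rat q)" by simp
        then have "(INF q. ?f q) \<le> ereal (of_rat q)" using INF_lower[of q UNIV ?f] by simp
        moreover have "ereal (of_rat q) \<le> y" using q real by simp
        ultimately show ?thesis by (rule order_trans)
      next
        case PInf then show ?thesis by simp
      next
        case MInf then show ?thesis using y by simp
      qed
    qed
  qed
  then show ?thesis unfolding ustar_def by simp
qed

definition uval :: "(nat \<Rightarrow> real) \<Rightarrow> nat \<Rightarrow> real" where
  "uval J n = (if n = 0 then ustar J else J n)"
definition cand :: "real \<Rightarrow> nat \<Rightarrow> (nat \<Rightarrow> real) \<Rightarrow> nat \<Rightarrow> real" where
  "cand \<tau> N J i = (if i mod 3 = 0 then 0 else if i mod 3 = 1 then (uval J (i div 3) - real N * \<tau>) / real N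
      else uval J (i div 3) / real N)"

lemma LLf_noncand:
  assumes nJ: "\<forall>k\<ge>1. J k \<noteq> u" and nu: "ustar J \<noteq> u"
  shows "LLf J v N u = v (card (Sle J u)) / N"
proof -
  have eq: "Slt J u = Sle J u" using nJ by (auto simp: Slt_def Sle_def order_le_less)
  show ?thesis
  proof (cases "finite (Slt J u)")
    case True then show ?thesis unfolding LLf_def eq by simp
  next
    case False
    note F = False
    show ?thesis
    proof (cases "\<exists>q::rat. of_rat q < u \<and> infinite (Sle J (of_rat q))")
      case True
      then obtain q :: rat where q: "of_rat q < u" "infinite (Sle J (of_rat q))" by blast
      have "Sle J (of_rat q) \<subseteq> Sle J u" using q by (intro Sle_mono) auto
      then have "infinite (Sle J u)" using q finite_subset by blast
      then show ?thesis unfolding LLf_def using F True by simp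
    next
      case False
      then have "ustar J = u" using F by (intro ustar_eq) auto
      then show ?thesis using nu by simp
    qed
  qed
qed

lemma jump_zero:
  assumes N: "N > 0" and nc: "t \<notin> range (cand \<tau> N (Jt s))"
  shows "jump_size (Yproc \<tau> \<mu> N c s) t = 0"
proof -
  have NN: "real N > 0" using N by simp
  have t0: "t \<noteq> 0" using nc[unfolded image_iff] by (metis UNIV_I cand_def mod_0 div_0)
  show ?thesis
  proof (cases "t < 0")
    case True
    define u where "u = real N * t + real N * \<tau>"
    have tu: "t = (u - real N * \<tau>) / real N" unfolding u_def using NN by (simp add: field_simps)
    have nJ: "\<forall>k\<ge>1. Jt s k \<noteq> u"
    proof (intro allI impI notI)
      fix k :: nat assume k: "1 \<le> k" "Jt s k = u"
      have d: "(3 * k + 1) mod 3 = 1" "(3 * k + 1) div 3 = k" by presburger+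
      have "cand \<tau> N (Jt s) (3 * k + 1) = t" using k tu unfolding cand_def uval_def d by simp
      then show False using nc by (metis rangeI)
    qed
    have nu: "ustar (Jt s) \<noteq> u"
    proof
      assume "ustar (Jt s) = u"
      then have "cand \<tau> N (Jt s) 1 = t" using tu by (simp add: cand_def uval_def)
      then show False using nc by (metis rangeI)
    qed
    show ?thesis unfolding jump_size_def Lim_Yproc[OF N]
      using True LLf_noncand[OF nJ nu] by (simp add: Yproc_eq vA_def u_def)
  next
    case False
    then have tp: "t > 0" using t0 by simp
    define u where "u = real N * t + 0"
    have tu: "t = u / real N" unfolding u_def using NN by (simp add: field_simps)
    have nJ: "\<forall>k\<ge>1. Jt s k \<noteq> u"
    proof (intro allI impI notI)
      fix k :: nat assume k: "1 \<le> k" "Jt s k = u"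
      have d: "(3 * k + 2) mod 3 = 2" "(3 * k + 2) div 3 = k" by presburger+
      have "cand \<tau> N (Jt s) (3 * k + 2) = t" using k tu unfolding cand_def uval_def d by simp
      then show False using nc by (metis rangeI)
    qed
    have nu: "ustar (Jt s) \<noteq> u"
    proof
      assume "ustar (Jt s) = u"
      then have "cand \<tau> N (Jt s) 2 = t" using tu by (simp add: cand_def uval_def)
      then show False using nc by (metis rangeI)
    qed
    show ?thesis unfolding jump_size_def Lim_Yproc[OF N]
      using tp LLf_noncand[OF nJ nu] by (simp add: Yproc_eq vB_def u_def)
  qed
qed

lemma SUP_countable_support:
  fixes g :: "real \<Rightarrow> real" and f :: "nat \<Rightarrow> real"
  assumes nn: "\<And>t. g t \<ge> 0" and z: "\<And>t. t \<in> A \<Longrightarrow> t \<notin> range f \<Longrightarrow> g t = 0" and ne: "A \<noteq> {}"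
  shows "(SUP t\<in>A. ereal (g t)) = (SUP i. ereal (if f i \<in> A then g (f i) else 0))"
proof (rule antisym)
  have S0: "0 \<le> (SUP i. ereal (if f i \<in> A then g (f i) else 0))"
    using nn by (intro SUP_upper2[of 0]) auto
  show "(SUP t\<in>A. ereal (g t)) \<le> (SUP i. ereal (if f i \<in> A then g (f i) else 0))"
  proof (rule SUP_least)
    fix t assume t: "t \<in> A"
    show "ereal (g t) \<le> (SUP i. ereal (if f i \<in> A then g (f i) else 0))"
    proof (cases "t \<in> range f")
      case True
      then obtain i where "t = f i" by auto
      then show ?thesis using t by (intro SUP_upper2[of i]) auto
    next
      case False
      then show ?thesis using z[OF t] S0 by (simp add: zero_ereal_def[symmetric])
    qed
  qed
  obtain t0 where t0: "t0 \<in> A" using ne by auto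
  have A0: "0 \<le> (SUP t\<in>A. ereal (g t))"
    using t0 nn by (intro SUP_upper2[of t0]) auto
  show "(SUP i. ereal (if f i \<in> A then g (f i) else 0)) \<le> (SUP t\<in>A. ereal (g t))"
  proof (rule SUP_least)
    fix i
    show "ereal (if f i \<in> A then g (f i) else 0) \<le> (SUP t\<in>A. ereal (g t))"
      using A0 by (cases "f i \<in> A") (auto intro: SUP_upper simp: zero_ereal_def[symmetric])
  qed
qed


lemma jump_formula:
  assumes N: "N > 0"
  shows "jump_size (Yproc \<tau> \<mu> N c s) t =
    \<bar>(if t < 0 then vA \<tau> \<mu> N c (card (Sle (Jt s) (real N * t + real N * \<tau>))) / real N
       else vB \<tau> \<mu> N c (card (Sle (Jt s) (real N * t + 0))) / real N) -
     (if t \<le> 0 then LLf (Jt s) (vA \<tau> \<mu> N c) (real N) (real N * t + real N * \<tau>)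
       else LLf (Jt s) (vB \<tau> \<mu> N c) (real N) (real N * t + 0))\<bar>"
  unfolding jump_size_def Lim_Yproc[OF N] by (simp add: Yproc_eq vA_def vB_def)

lemma event_measurable:
  fixes c :: "nat \<Rightarrow> 'w \<Rightarrow> bool" and \<sigma> :: "nat \<Rightarrow> 'w \<Rightarrow> real"
  assumes c[measurable]: "\<And>n. Measurable.pred M (c n)" and s[measurable]: "\<And>n. \<sigma> n \<in> borel_measurable M"
    and ne: "-\<tau> \<le> T"
  shows "{\<omega> \<in> space M. (SUP t\<in>{-\<tau>..T}.
            ereal (jump_size (Yproc \<tau> \<mu> N (\<lambda>n. c n \<omega>) (\<lambda>n. \<sigma> n \<omega>)) t)) > ereal \<epsilon>} \<in> sets M"
proof (cases "N = 0")
  case True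
  have Y0: "Yproc \<tau> \<mu> N cc ss = (\<lambda>_. 0)" for cc ss
    using True by (auto simp: Yproc_def)
  have "Lim (at_left t) (\<lambda>_::real. 0::real) = 0" for t :: real
    by (rule tendsto_Lim) (auto simp: trivial_limit_at_left_real)
  then have "jump_size (Yproc \<tau> \<mu> N cc ss) t = 0" for cc ss t
    unfolding jump_size_def Y0 by simp
  then show ?thesis by simp
next
  case False
  then have N: "N > 0" by simp
  define Jw where "Jw \<omega> = Jt (\<lambda>n. \<sigma> n \<omega>)" for \<omega>
  have Jw[measurable]: "(\<lambda>\<omega>. Jw \<omega> k) \<in> borel_measurable M" for k
    unfolding Jw_def Jt_def by measurable
  have ustar[measurable]: "(\<lambda>\<omega>. ustar (Jw \<omega>)) \<in> borel_measurable M"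
    by (rule measurable_ustar) simp
  have uval[measurable]: "(\<lambda>\<omega>. uval (Jw \<omega>) k) \<in> borel_measurable M" for k
    unfolding uval_def by measurable
  have candm[measurable]: "(\<lambda>\<omega>. cand \<tau> N (Jw \<omega>) i) \<in> borel_measurable M" for i
    unfolding cand_def by measurable
  have vAm: "(\<lambda>\<omega>. vA \<tau> \<mu> N (\<lambda>n. c n \<omega>) n) \<in> borel_measurable M" for n
    unfolding vA_def by measurable
  have vBm: "(\<lambda>\<omega>. vB \<tau> \<mu> N (\<lambda>n. c n \<omega>) n) \<in> borel_measurable M" for n
    unfolding vB_def by measurable
  have cardm: "(\<lambda>\<omega>. card (Sle (Jw \<omega>) (uu \<omega>))) \<in> M \<rightarrow>\<^sub>M count_space UNIV"
    if [measurable]: "uu \<in> borel_measurable M" for uu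
    unfolding Sle_def by measurable
  have term_m: "(\<lambda>\<omega>. ereal (if cand \<tau> N (Jw \<omega>) i \<in> {-\<tau>..T} then
      jump_size (Yproc \<tau> \<mu> N (\<lambda>n. c n \<omega>) (\<lambda>n. \<sigma> n \<omega>)) (cand \<tau> N (Jw \<omega>) i) else 0)) \<in> borel_measurable M" for i
  proof -
    define t where "t \<omega> = cand \<tau> N (Jw \<omega>) i" for \<omega>
    have t[measurable]: "t \<in> borel_measurable M" unfolding t_def by measurable
    have uA[measurable]: "(\<lambda>\<omega>. real N * t \<omega> + real N * \<tau>) \<in> borel_measurable M" by measurable
    have uB[measurable]: "(\<lambda>\<omega>. real N * t \<omega> + 0) \<in> borel_measurable M" by measurable
    have m1: "(\<lambda>\<omega>. vA \<tau> \<mu> N (\<lambda>n. c n \<omega>) (card (Sle (Jw \<omega>) (real N * t \<omega> + real N * \<tau>))) / real N) \<in> borel_measurable M"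
      by (intro borel_measurable_divide measurable_comp_nat[OF vAm] cardm uA) simp
    have m2: "(\<lambda>\<omega>. vB \<tau> \<mu> N (\<lambda>n. c n \<omega>) (card (Sle (Jw \<omega>) (real N * t \<omega> + 0))) / real N) \<in> borel_measurable M"
      by (intro borel_measurable_divide measurable_comp_nat[OF vBm] cardm uB) simp
    have m3: "(\<lambda>\<omega>. LLf (Jw \<omega>) (vA \<tau> \<mu> N (\<lambda>n. c n \<omega>)) (real N) (real N * t \<omega> + real N * \<tau>)) \<in> borel_measurable M"
      by (rule measurable_LLf[OF Jw vAm uA])
    have m4: "(\<lambda>\<omega>. LLf (Jw \<omega>) (vB \<tau> \<mu> N (\<lambda>n. c n \<omega>)) (real N) (real N * t \<omega> + 0)) \<in> borel_measurable M"
      by (rule measurable_LLf[OF Jw vBm uB])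
    note [measurable] = m1 m2 m3 m4
    show ?thesis
      unfolding t_def[symmetric] jump_formula[OF N] Jw_def[symmetric] by measurable
  qed
  have eqS: "(SUP t\<in>{-\<tau>..T}. ereal (jump_size (Yproc \<tau> \<mu> N (\<lambda>n. c n \<omega>) (\<lambda>n. \<sigma> n \<omega>)) t)) =
      (SUP i. ereal (if cand \<tau> N (Jw \<omega>) i \<in> {-\<tau>..T} then
      jump_size (Yproc \<tau> \<mu> N (\<lambda>n. c n \<omega>) (\<lambda>n. \<sigma> n \<omega>)) (cand \<tau> N (Jw \<omega>) i) else 0))" for \<omega>
  proof (rule SUP_countable_support)
    show "0 \<le> jump_size (Yproc \<tau> \<mu> N (\<lambda>n. c n \<omega>) (\<lambda>n. \<sigma> n \<omega>)) t" for t
      by (simp add: jump_size_def)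
    show "jump_size (Yproc \<tau> \<mu> N (\<lambda>n. c n \<omega>) (\<lambda>n. \<sigma> n \<omega>)) t = 0"
      if "t \<notin> range (cand \<tau> N (Jw \<omega>))" for t
      using that unfolding Jw_def by (rule jump_zero[OF N])
  qed (use ne in auto)
  have "(\<lambda>\<omega>. SUP i. ereal (if cand \<tau> N (Jw \<omega>) i \<in> {-\<tau>..T} then
      jump_size (Yproc \<tau> \<mu> N (\<lambda>n. c n \<omega>) (\<lambda>n. \<sigma> n \<omega>)) (cand \<tau> N (Jw \<omega>) i) else 0)) \<in> borel_measurable M"
    by (rule borel_measurable_SUP) (use term_m in auto)
  then show ?thesis unfolding eqS by measurable
qed

context
  fixes \<tau> \<mu> :: real and N :: nat and c :: "nat \<Rightarrow> bool"
  assumes N: "N > 0" and mu: "\<mu> \<ge> 0"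
begin

definition "Eb n = \<mu> * real N * (1 + 1 / real N) ^ n"
definition "Db m = Eb m / real N + (Eb m)\<^sup>2 / (real N)\<^sup>2"

lemma Eb_nonneg: "0 \<le> Eb n" unfolding Eb_def using mu by simp

lemma Eb_mono: "n \<le> m \<Longrightarrow> Eb n \<le> Eb m"
  unfolding Eb_def using mu by (intro mult_left_mono power_increasing) auto

lemma D1: "0 \<le> xi \<tau> \<mu> N c n j \<and> xi \<tau> \<mu> N c n j \<le> Eb n"
proof (induction n arbitrary: j)
  case 0 then show ?case using mu by (simp add: Eb_def)
next
  case (Suc n)
  have IH: "0 \<le> xi \<tau> \<mu> N c n i" "xi \<tau> \<mu> N c n i \<le> Eb n" for i using Suc by auto
  have EE: "Eb n \<le> Eb (Suc n)" by (rule Eb_mono) simp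
  have ES: "Eb (Suc n) = Eb n * (1 + 1 / real N)" unfolding Eb_def by simp
  show ?case
  proof (cases "c n")
    case True
    have "xi \<tau> \<mu> N c n 0 * (1 + 1 / real N) \<le> Eb n * (1 + 1 / real N)"
      using IH(2)[of 0] by (intro mult_right_mono) auto
    then show ?thesis using True IH[of "j + 1"] IH[of j] IH[of 0] EE ES
      by (auto simp: theta_plus_def)
  next
    case False
    define a where "a = xi \<tau> \<mu> N c n (- int (Lval \<tau> N)) / (real N)\<^sup>2"
    have a: "0 \<le> a" unfolding a_def using IH(1) by simp
    have "xi \<tau> \<mu> N c n 0 * (1 - a) \<le> xi \<tau> \<mu> N c n 0"
      using a IH(1)[of 0] by (simp add: mult_left_le)
    then have "max (xi \<tau> \<mu> N c n 0 * (1 - a)) 0 \<le> Eb (Suc n)"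
      using IH[of 0] EE Eb_nonneg[of "Suc n"] by auto
    then show ?thesis using False IH[of "j + 1"] IH[of j] EE
      by (auto simp: theta_minus_def a_def)
  qed
qed

lemma D2: "\<bar>xi \<tau> \<mu> N c (Suc n) 0 - xi \<tau> \<mu> N c n 0\<bar> \<le>
   xi \<tau> \<mu> N c n 0 / real N + xi \<tau> \<mu> N c n 0 * xi \<tau> \<mu> N c n (- int (Lval \<tau> N)) / (real N)\<^sup>2"
proof -
  define x0 where "x0 = xi \<tau> \<mu> N c n 0"
  define a where "a = xi \<tau> \<mu> N c n (- int (Lval \<tau> N)) / (real N)\<^sup>2"
  have x0: "0 \<le> x0" unfolding x0_def using D1 by auto
  have a: "0 \<le> a" unfolding a_def using D1 by auto
  have p1: "0 \<le> x0 / real N" using x0 by simp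
  have p2: "0 \<le> x0 * a" using x0 a by simp
  have key: "\<bar>max (x0 * (1 - a)) 0 - x0\<bar> \<le> x0 * a"
  proof (cases "x0 * (1 - a) \<ge> 0")
    case True then show ?thesis using x0 a by (simp add: max_def algebra_simps)
  next
    case False
    then have "1 - a < 0" using x0 by (metis mult_nonneg_nonneg not_le)
    then have "1 < a" by simp
    then have "x0 \<le> x0 * a" using x0 by (simp add: mult_le_cancel_left1)
    then show ?thesis using False x0 by (simp add: max_def)
  qed
  show ?thesis
  proof (cases "c n")
    case True
    then show ?thesis using p2 x0 unfolding x0_def[symmetric] a_def
      by (simp add: theta_plus_def x0_def algebra_simps)
  next
    case False
    then have "\<bar>xi \<tau> \<mu> N c (Suc n) 0 - xi \<tau> \<mu> N c n 0\<bar> = \<bar>max (x0 * (1 - a)) 0 - x0\<bar>"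
      by (simp add: theta_minus_def x0_def a_def)
    also have "\<dots> \<le> x0 * a" by (rule key)
    finally show ?thesis using p1 by (simp add: x0_def a_def)
  qed
qed

lemma D2m: assumes "n \<le> m" shows "\<bar>xi \<tau> \<mu> N c (Suc n) 0 - xi \<tau> \<mu> N c n 0\<bar> \<le> Db m"
proof -
  define x0 where "x0 = xi \<tau> \<mu> N c n 0"
  define y where "y = xi \<tau> \<mu> N c n (- int (Lval \<tau> N))"
  have x0: "0 \<le> x0" "x0 \<le> Eb m" unfolding x0_def using D1[of n 0] Eb_mono[OF assms] by auto
  have y: "0 \<le> y" "y \<le> Eb m" unfolding y_def using D1[of n "- int (Lval \<tau> N)"] Eb_mono[OF assms] by auto
  have "x0 / real N \<le> Eb m / real N" using x0 by (simp add: divide_right_mono)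
  moreover have "x0 * y / (real N)\<^sup>2 \<le> (Eb m)\<^sup>2 / (real N)\<^sup>2"
    using x0 y by (intro divide_right_mono) (auto simp: power2_eq_square intro: mult_mono)
  ultimately show ?thesis using D2[of n] unfolding Db_def x0_def[symmetric] y_def[symmetric] by linarith
qed

lemma D3: assumes "n \<le> m" "- int (Lval \<tau> N) \<le> j" "j \<le> 0"
  shows "\<bar>xi \<tau> \<mu> N c (Suc n) j - xi \<tau> \<mu> N c n j\<bar> \<le> Db m"
  using assms
proof (induction n arbitrary: j)
  case 0
  have D0: "0 \<le> Db m" unfolding Db_def using Eb_nonneg by simp
  show ?case
  proof (cases "j = 0")
    case True then show ?thesis using D2m[of 0 m] by simp
  next
    case False
    then show ?thesis using 0 D0 by (simp add: theta_plus_def theta_minus_def)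
  qed
next
  case (Suc n)
  show ?case
  proof (cases "j = 0")
    case True then show ?thesis using D2m[of "Suc n" m] Suc by simp
  next
    case False
    then have "j < 0" using Suc by simp
    then have eq: "xi \<tau> \<mu> N c (Suc (Suc n)) j = xi \<tau> \<mu> N c (Suc n) (j + 1)"
                  "xi \<tau> \<mu> N c (Suc n) j = xi \<tau> \<mu> N c n (j + 1)"
      using Suc.prems by (auto simp: theta_plus_def theta_minus_def)
    show ?thesis unfolding eq using Suc.IH[of "j + 1"] Suc.prems \<open>j < 0\<close> by simp
  qed
qed

lemma D4: assumes "n \<le> m" "- int (Lval \<tau> N) \<le> j" "j \<le> 0"
  shows "\<bar>xi \<tau> \<mu> N c n j - \<mu> * real N\<bar> \<le> Db m * real_of_int (max 0 (int n + j))"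
  using assms
proof (induction n arbitrary: j)
  case 0 then show ?case by simp
next
  case (Suc n)
  have D0: "0 \<le> Db m" unfolding Db_def using Eb_nonneg by simp
  show ?case
  proof (cases "j = 0")
    case True
    have "\<bar>xi \<tau> \<mu> N c (Suc n) 0 - \<mu> * real N\<bar> \<le>
          \<bar>xi \<tau> \<mu> N c (Suc n) 0 - xi \<tau> \<mu> N c n 0\<bar> + \<bar>xi \<tau> \<mu> N c n 0 - \<mu> * real N\<bar>" by linarith
    also have "\<dots> \<le> Db m + Db m * real n"
      using D2m[of n m] Suc.IH[of 0] Suc.prems by (intro add_mono) auto
    also have "\<dots> = Db m * real_of_int (max 0 (int (Suc n) + 0))" by (simp add: algebra_simps)
    finally show ?thesis using True by simp
  next
    case False
    then have "j < 0" using Suc by simp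
    then have eq: "xi \<tau> \<mu> N c (Suc n) j = xi \<tau> \<mu> N c n (j + 1)"
      using Suc.prems by (auto simp: theta_plus_def theta_minus_def)
    have e2: "int n + (j + 1) = int (Suc n) + j" by simp
    show ?thesis unfolding eq e2[symmetric] using Suc.IH[of "j + 1"] Suc.prems \<open>j < 0\<close> by simp
  qed
qed

end

lemma Jt_Suc: "Jt s (Suc k) = Jt s k + s k" unfolding Jt_def by simp

lemma Jt_strict_mono:
  assumes pos: "\<And>i. s i > 0" shows "strict_mono (Jt s)"
  by (rule strict_monoI_Suc) (simp add: Jt_Suc pos add_pos_pos)

lemma Sle_sub_m1:
  assumes pos: "\<And>i. s i > 0" and u: "u < Jt s m1"
  shows "Sle (Jt s) u \<subseteq> {1..<m1}"
proof
  fix k assume k: "k \<in> Sle (Jt s) u"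
  then have k1: "1 \<le> k" and k2: "Jt s k \<le> u" unfolding Sle_def by blast+
  have "k < m1"
  proof (rule ccontr)
    assume "\<not> k < m1"
    then have "m1 \<le> k" by simp
    then have "Jt s m1 \<le> Jt s k" using strict_mono_less_eq[OF Jt_strict_mono[OF pos], where x=m1 and y=k] by simp
    then show False using k2 u by linarith
  qed
  then show "k \<in> {1..<m1}" using k1 by simp
qed

lemma card_Sle_Slt:
  assumes pos: "\<And>i. s i > 0" and u: "u < Jt s m1"
  shows "card (Slt (Jt s) u) \<le> card (Sle (Jt s) u)" "card (Sle (Jt s) u) \<le> card (Slt (Jt s) u) + 1"
    "card (Sle (Jt s) u) \<le> m1" "finite (Slt (Jt s) u)"
proof -
  have fin: "finite (Sle (Jt s) u)" by (rule finite_subset[OF Sle_sub_m1[OF pos u]]) simp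
  have sub: "Slt (Jt s) u \<subseteq> Sle (Jt s) u" by (auto simp: Slt_def Sle_def)
  then show "finite (Slt (Jt s) u)" by (rule finite_subset[OF _ fin])
  show "card (Slt (Jt s) u) \<le> card (Sle (Jt s) u)" using sub fin by (rule card_mono[rotated])
  have inj: "inj (Jt s)" by (rule strict_mono_imp_inj_on[OF Jt_strict_mono[OF pos]])
  have "{k. 1 \<le> k \<and> Jt s k = u} \<subseteq> {inv (Jt s) u}"
  proof
    fix k assume "k \<in> {k. 1 \<le> k \<and> Jt s k = u}"
    then have "Jt s k = u" by simp
    then have "inv (Jt s) u = k" using inv_f_f[OF inj] by metis
    then show "k \<in> {inv (Jt s) u}" by simp
  qed
  then have "card {k. 1 \<le> k \<and> Jt s k = u} \<le> card {inv (Jt s) u}" by (rule card_mono[rotated]) simp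
  then have c1: "card {k. 1 \<le> k \<and> Jt s k = u} \<le> 1" by simp
  have eq: "Sle (Jt s) u = Slt (Jt s) u \<union> {k. 1 \<le> k \<and> Jt s k = u}" unfolding Slt_def Sle_def by (auto simp: order_le_less)
  have "card (Sle (Jt s) u) \<le> card (Slt (Jt s) u) + card {k. 1 \<le> k \<and> Jt s k = u}"
    unfolding eq by (rule card_Un_le)
  then show "card (Sle (Jt s) u) \<le> card (Slt (Jt s) u) + 1" using c1 by linarith
  have "card (Sle (Jt s) u) \<le> card {1..<m1}" using Sle_sub_m1[OF pos u] by (rule card_mono[rotated]) auto
  then show "card (Sle (Jt s) u) \<le> m1" by simp
qed


lemma abs_div_helper:
  fixes N :: real assumes "N > 0" shows "\<bar>a - v / N\<bar> = \<bar>a * N - v\<bar> / N"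
proof -
  have "a - v / N = (a * N - v) / N" using assms by (simp add: field_simps)
  then show ?thesis using assms by (simp add: abs_divide)
qed

lemma step_bound:
  assumes N: "N > 0" and mu: "\<mu> \<ge> 0" and j: "- int (Lval \<tau> N) \<le> j" "j \<le> 0"
    and n: "n \<le> n'" "n' \<le> n + 1" "n \<le> m"
  shows "\<bar>xi \<tau> \<mu> N c n' j - xi \<tau> \<mu> N c n j\<bar> \<le> Db \<mu> N m"
proof (cases "n' = n")
  case True
  have "0 \<le> Db \<mu> N m" using Eb_nonneg[OF N mu] by (simp add: Db_def[OF N mu])
  then show ?thesis using True by simp
next
  case False
  then have "n' = Suc n" using n by simp
  then show ?thesis using D3[OF N mu n(3) j] by simp
qed

lemma jump_bound_good:
  assumes N: "N > 0" and mu: "\<mu> \<ge> 0" and tau: "\<tau> > 0" and T: "T > 0"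
    and pos: "\<And>i. s i > 0"
    and m1: "real N * (T + \<tau>) < Jt s m1"
    and m2: "card (Slt (Jt s) (real N * \<tau>)) \<le> Lval \<tau> N + d"
    and t: "t \<in> {-\<tau>..T}"
  shows "jump_size (Yproc \<tau> \<mu> N c s) t \<le> Db \<mu> N m1 * (1 + real d) / real N"
proof -
  have NN: "real N > 0" using N by simp
  have D0: "0 \<le> Db \<mu> N m1" using Eb_nonneg[OF N mu] by (simp add: Db_def[OF N mu])
  have base: "Db \<mu> N m1 / real N \<le> Db \<mu> N m1 * (1 + real d) / real N"
  proof -
    have "Db \<mu> N m1 \<le> Db \<mu> N m1 * (1 + real d)" using D0 by (simp add: distrib_left)
    then show ?thesis using NN by (intro divide_right_mono) auto
  qed
  define J where "J = Jt s"
  consider "t < 0" | "t = 0" | "t > 0" by linarith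
  then show ?thesis
  proof cases
    case 1
    define u where "u = real N * t + real N * \<tau>"
    have "real N * t < 0" using NN 1 by (simp add: mult_pos_neg)
    moreover have "real N * \<tau> < real N * (T + \<tau>)" using NN T by simp
    ultimately have u1: "u < Jt s m1" unfolding u_def using m1 by linarith
    note cs = card_Sle_Slt[OF pos u1]
    have LL: "LLf J (vA \<tau> \<mu> N c) (real N) u = vA \<tau> \<mu> N c (card (Slt J u)) / real N"
      unfolding LLf_def J_def using cs(4) by simp
    have "jump_size (Yproc \<tau> \<mu> N c s) t =
      \<bar>vA \<tau> \<mu> N c (card (Sle J u)) - vA \<tau> \<mu> N c (card (Slt J u))\<bar> / real N"
      unfolding jump_formula[OF N] using 1 LL NN by (simp add: u_def[symmetric] J_def diff_divide_distrib[symmetric])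
    also have "\<dots> \<le> Db \<mu> N m1 / real N"
      unfolding vA_def J_def using cs NN
      by (intro divide_right_mono step_bound[OF N mu]) auto
    finally show ?thesis using base by linarith
  next
    case 3
    define u where "u = real N * t"
    have "real N * t \<le> real N * T" using NN t by (intro mult_left_mono) auto
    moreover have "real N * T < real N * (T + \<tau>)" using NN tau by simp
    ultimately have u1: "u < Jt s m1" unfolding u_def using m1 by linarith
    note cs = card_Sle_Slt[OF pos u1]
    have LL: "LLf J (vB \<tau> \<mu> N c) (real N) u = vB \<tau> \<mu> N c (card (Slt J u)) / real N"
      unfolding LLf_def J_def using cs(4) by simp
    have "jump_size (Yproc \<tau> \<mu> N c s) t =
      \<bar>vB \<tau> \<mu> N c (card (Sle J u)) - vB \<tau> \<mu> N c (card (Slt J u))\<bar> / real N"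
      unfolding jump_formula[OF N] using 3 LL NN by (simp add: u_def[symmetric] J_def diff_divide_distrib[symmetric])
    also have "\<dots> \<le> Db \<mu> N m1 / real N"
      unfolding vB_def J_def using cs NN
      by (intro divide_right_mono step_bound[OF N mu]) auto
    finally show ?thesis using base by linarith
  next
    case 2
    define u where "u = real N * \<tau>"
    have "real N * \<tau> < real N * (T + \<tau>)" using NN T by simp
    then have u1: "u < Jt s m1" unfolding u_def using m1 by linarith
    note cs = card_Sle_Slt[OF pos u1]
    have LL: "LLf J (vA \<tau> \<mu> N c) (real N) u = vA \<tau> \<mu> N c (card (Slt J u)) / real N"
      unfolding LLf_def J_def using cs(4) by simp
    have S0: "Sle J 0 = {}"
    proof -
      have "Jt s k > 0" if "1 \<le> k" for k
      proof -
        have "Jt s 0 < Jt s k" using Jt_strict_mono[OF pos] that by (simp add: strict_mono_less)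
        then show ?thesis by (simp add: Jt_def)
      qed
      then show ?thesis unfolding Sle_def J_def by force
    qed
    have "jump_size (Yproc \<tau> \<mu> N c s) t =
      \<bar>\<mu> * real N - vA \<tau> \<mu> N c (card (Slt J u))\<bar> / real N"
      unfolding jump_formula[OF N] using 2 LL NN S0
      by (simp add: u_def[symmetric] J_def vB_def abs_div_helper)
    also have "\<dots> \<le> Db \<mu> N m1 * real_of_int (max 0 (int (card (Slt J u)) + - int (Lval \<tau> N))) / real N"
      unfolding vA_def using D4[OF N mu, where n="card (Slt J u)" and m=m1 and j="- int (Lval \<tau> N)" and \<tau>=\<tau> and c=c] cs NN
      by (intro divide_right_mono) (auto simp: J_def abs_minus_commute)
    also have "\<dots> \<le> Db \<mu> N m1 * (1 + real d) / real N"
      using m2 D0 NN unfolding J_def u_def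
      by (intro divide_right_mono mult_left_mono) auto
    finally show ?thesis .
  qed
qed

context
  fixes M :: "'w measure" and c :: "nat \<Rightarrow> 'w \<Rightarrow> bool" and \<sigma> :: "nat \<Rightarrow> 'w \<Rightarrow> real"
  assumes P: "prob_space M"
    and ind: "prob_space.indep_vars M (\<lambda>_. count_space UNIV \<Otimes>\<^sub>M borel)
           (\<lambda>n \<omega>. (c n \<omega>, \<sigma> n \<omega>)) UNIV"
    and dis: "\<And>n. distr M (count_space UNIV \<Otimes>\<^sub>M borel) (\<lambda>\<omega>. (c n \<omega>, \<sigma> n \<omega>))
           = measure_pmf (bernoulli_pmf (1/2)) \<Otimes>\<^sub>M density lborel (exponential_density 1)"
begin

interpretation prob_space M by (rule P)

lemma pair_meas: "(\<lambda>\<omega>. (c n \<omega>, \<sigma> n \<omega>)) \<in> M \<rightarrow>\<^sub>M (count_space UNIV \<Otimes>\<^sub>M borel)"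
  using ind unfolding indep_vars_def by auto

lemma c_meas[measurable]: "Measurable.pred M (c n)"
proof -
  have "(\<lambda>\<omega>. fst (c n \<omega>, \<sigma> n \<omega>)) \<in> M \<rightarrow>\<^sub>M count_space UNIV"
    using measurable_compose[OF pair_meas measurable_fst] by (simp add: comp_def)
  then show ?thesis by simp
qed

lemma s_meas[measurable]: "\<sigma> n \<in> borel_measurable M"
proof -
  have "(\<lambda>\<omega>. snd (c n \<omega>, \<sigma> n \<omega>)) \<in> borel_measurable M"
    using measurable_compose[OF pair_meas measurable_snd] by (simp add: comp_def)
  then show ?thesis by simp
qed

lemma s_distributed: "distributed M lborel (\<sigma> n) (exponential_density 1)"
proof -
  let ?B = "measure_pmf (bernoulli_pmf (1/2))"
  let ?D = "density lborel (exponential_density 1)"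
  interpret D: prob_space ?D by (rule prob_space_exponential_density) simp
  have snd_m: "snd \<in> (count_space UNIV \<Otimes>\<^sub>M borel) \<rightarrow>\<^sub>M lborel"
    by (simp add: measurable_lborel2)
  have "distr M lborel (\<sigma> n) = distr M lborel (snd \<circ> (\<lambda>\<omega>. (c n \<omega>, \<sigma> n \<omega>)))"
    by (simp add: comp_def)
  also have "\<dots> = distr (distr M (count_space UNIV \<Otimes>\<^sub>M borel) (\<lambda>\<omega>. (c n \<omega>, \<sigma> n \<omega>))) lborel snd"
    by (rule distr_distr[symmetric, OF snd_m pair_meas])
  also have "\<dots> = distr (?B \<Otimes>\<^sub>M ?D) lborel snd" unfolding dis ..
  also have "\<dots> = ?D"
  proof (rule measure_eqI)
    show "sets (distr (?B \<Otimes>\<^sub>M ?D) lborel snd) = sets ?D" by simp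
    fix A assume A: "A \<in> sets (distr (?B \<Otimes>\<^sub>M ?D) lborel snd)"
    then have A': "A \<in> sets borel" by simp
    have "emeasure (distr (?B \<Otimes>\<^sub>M ?D) lborel snd) A = emeasure (?B \<Otimes>\<^sub>M ?D) (snd -` A \<inter> space (?B \<Otimes>\<^sub>M ?D))"
      using A by (subst emeasure_distr) (auto simp: measurable_lborel2)
    also have "snd -` A \<inter> space (?B \<Otimes>\<^sub>M ?D) = space ?B \<times> A"
      using A' by (auto simp: space_pair_measure dest: sets.sets_into_space)
    also have "emeasure (?B \<Otimes>\<^sub>M ?D) (space ?B \<times> A) = emeasure ?B (space ?B) * emeasure ?D A"
      using A' by (intro D.emeasure_pair_measure_Times) auto
    also have "\<dots> = emeasure ?D A" by (simp add: measure_pmf.emeasure_space_1)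
    finally show "emeasure (distr (?B \<Otimes>\<^sub>M ?D) lborel snd) A = emeasure ?D A" .
  qed
  finally have eq: "distr M lborel (\<sigma> n) = ?D" .
  show ?thesis unfolding distributed_def using eq
    by (auto simp: measurable_lborel2)
qed

lemma s_pos_AE: "AE \<omega> in M. \<forall>i. 0 < \<sigma> i \<omega>"
proof -
  have "AE \<omega> in M. 0 < \<sigma> i \<omega>" for i
  proof -
    have "prob {\<omega> \<in> space M. \<sigma> i \<omega> \<le> 0} = 1 - exp (- 0 * 1)"
      using exponential_distributedD_le[OF s_distributed, of 0] by simp
    then have "prob {\<omega> \<in> space M. \<sigma> i \<omega> \<le> 0} = 0" by simp
    then have "AE \<omega> in M. \<omega> \<notin> {\<omega> \<in> space M. \<sigma> i \<omega> \<le> 0}"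
      by (subst prob_eq_0[symmetric]) auto
    then show ?thesis using AE_space by eventually_elim auto
  qed
  then show ?thesis by (simp add: AE_all_countable)
qed

lemma s_indep: "indep_vars (\<lambda>_. borel) \<sigma> I"
proof -
  have "indep_vars (\<lambda>_. borel) (\<lambda>i \<omega>. snd (c i \<omega>, \<sigma> i \<omega>)) UNIV"
    by (rule indep_vars_compose2[OF ind]) simp
  then have "indep_vars (\<lambda>_. borel) \<sigma> UNIV" by simp
  then show ?thesis by (rule indep_vars_subset) simp
qed

lemma J_erlang:
  assumes m: "m \<ge> 1"
  shows "distributed M lborel (\<lambda>\<omega>. Jt (\<lambda>n. \<sigma> n \<omega>) m) (erlang_density (m - 1) 1)"
proof -
  have "distributed M lborel (\<lambda>x. \<Sum>i\<in>{..<m}. \<sigma> i x) (erlang_density (card {..<m} - 1) 1)"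
    using m by (intro exponential_distributed_sum s_distributed s_indep) (auto simp: lessThan_empty_iff)
  then show ?thesis by (simp add: Jt_def)
qed

lemma J_cheb:
  assumes m: "m \<ge> 1" and x: "x < real m"
  shows "prob {\<omega> \<in> space M. Jt (\<lambda>n. \<sigma> n \<omega>) m \<le> x} \<le> real m / (real m - x)\<^sup>2"
proof -
  define X where "X \<omega> = Jt (\<lambda>n. \<sigma> n \<omega>) m" for \<omega>
  have D: "distributed M lborel X (erlang_density (m - 1) 1)" unfolding X_def by (rule J_erlang[OF m])
  have Xm[measurable]: "X \<in> borel_measurable M" unfolding X_def Jt_def by measurable
  obtain k where k: "m = Suc k" using m by (cases m) auto
  have E: "expectation X = real m"
    using erlang_ith_moment[OF _ D, of 1] k by (simp add: fact_Suc)
  have V: "variance X = real m"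
    using erlang_distributed_variance[OF _ D] m by simp
  have I2: "integrable M (\<lambda>x. X x ^ 2)"
    using erlang_ith_moment_integrable[OF _ D, of 2] by simp
  have "prob {\<omega> \<in> space M. X \<omega> \<le> x} \<le> prob {\<omega> \<in> space M. \<bar>X \<omega> - expectation X\<bar> \<ge> real m - x}"
    using E by (intro finite_measure_mono) auto
  also have "\<dots> \<le> variance X / (real m - x)\<^sup>2"
    using x by (intro Chebyshev_inequality Xm I2) auto
  finally have "prob {\<omega> \<in> space M. X \<omega> \<le> x} \<le> real m / (real m - x)\<^sup>2" unfolding V .
  then show ?thesis unfolding X_def .
qed

end

declare s_meas[measurable del] c_meas[measurable del]

lemma cheb_arith:
  fixes m x a :: real assumes x: "0 \<le> x" and a: "0 < a" and am: "a \<le> m - x"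
  shows "m / (m - x)\<^sup>2 \<le> 1 / a + x / a\<^sup>2"
proof -
  have mx: "0 < m - x" using a am by linarith
  have "m / (m - x)\<^sup>2 = ((m - x) + x) / (m - x)\<^sup>2" by simp
  also have "\<dots> = (m - x) / (m - x)\<^sup>2 + x / (m - x)\<^sup>2" by (rule add_divide_distrib)
  also have "(m - x) / (m - x)\<^sup>2 = 1 / (m - x)" using mx by (simp add: power2_eq_square)
  finally have "m / (m - x)\<^sup>2 = 1 / (m - x) + x / (m - x)\<^sup>2" .
  also have "1 / (m - x) \<le> 1 / a" using a am by (intro divide_left_mono) auto
  also have "x / (m - x)\<^sup>2 \<le> x / a\<^sup>2"
    using a am x by (intro divide_left_mono power_mono) auto
  finally show ?thesis by simp
qed

lemma pow_exp_bound:
  assumes N: "N \<ge> 1" shows "(1 + 1 / real N) ^ m \<le> exp (real m / real N)"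
proof -
  have "(1 + 1 / real N) ^ m \<le> exp (1 / real N) ^ m"
    by (intro power_mono exp_ge_add_one_self) auto
  also have "\<dots> = exp (real m * (1 / real N))" by (rule exp_of_nat_mult[symmetric])
  finally show ?thesis by simp
qed

lemma Db_bound:
  assumes N: "N \<ge> 1" and mu: "\<mu> \<ge> 0" and mC: "real m / real N \<le> C0"
  shows "Db \<mu> N m \<le> \<mu> * exp C0 + (\<mu> * exp C0)\<^sup>2"
proof -
  have N0: "N > 0" using N by simp
  have NN: "real N > 0" using N by simp
  define a where "a = (1 + 1 / real N) ^ m"
  have a0: "0 \<le> a" unfolding a_def by simp
  have aC: "a \<le> exp C0"
    unfolding a_def using pow_exp_bound[OF N, of m] mC by (meson exp_le_cancel_iff order_trans)
  have "Db \<mu> N m = \<mu> * a + (\<mu> * a)\<^sup>2"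
    unfolding Db_def[OF N0 mu] Eb_def[OF N0 mu] a_def[symmetric] using NN
    by (simp add: field_simps power2_eq_square)
  also have "\<dots> \<le> \<mu> * exp C0 + (\<mu> * exp C0)\<^sup>2"
    using mu a0 aC by (intro add_mono mult_left_mono power_mono mult_nonneg_nonneg) auto
  finally show ?thesis .
qed


theorem proposition3p9:
  fixes M :: "'w measure" and c :: "nat \<Rightarrow> 'w \<Rightarrow> bool" and \<sigma> :: "nat \<Rightarrow> 'w \<Rightarrow> real"
    and \<tau> \<mu> T :: real
  assumes "prob_space M" and "\<tau> > 0" and "\<mu> \<ge> 0"
    and "prob_space.indep_vars M (\<lambda>_. count_space UNIV \<Otimes>\<^sub>M borel)
           (\<lambda>n \<omega>. (c n \<omega>, \<sigma> n \<omega>)) UNIV"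
    and "\<And>n. distr M (count_space UNIV \<Otimes>\<^sub>M borel) (\<lambda>\<omega>. (c n \<omega>, \<sigma> n \<omega>))
           = measure_pmf (bernoulli_pmf (1/2)) \<Otimes>\<^sub>M density lborel (exponential_density 1)"
    and "T > 0"
  shows "\<forall>\<epsilon>>0.
    (\<forall>N. {\<omega> \<in> space M. (SUP t\<in>{-\<tau>..T}.
            ereal (jump_size (Yproc \<tau> \<mu> N (\<lambda>n. c n \<omega>) (\<lambda>n. \<sigma> n \<omega>)) t)) > ereal \<epsilon>} \<in> sets M) \<and>
    ((\<lambda>N. measure M {\<omega> \<in> space M. (SUP t\<in>{-\<tau>..T}.
            ereal (jump_size (Yproc \<tau> \<mu> N (\<lambda>n. c n \<omega>) (\<lambda>n. \<sigma> n \<omega>)) t)) > ereal \<epsilon>})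
      \<longlonglongrightarrow> 0)"
proof (intro allI impI conjI)
  fix \<epsilon> :: real assume eps: "\<epsilon> > 0"
  note P = assms(1) and ind = assms(4) and dis = assms(5)
  interpret prob_space M by (rule P)
  have cm: "\<And>n. Measurable.pred M (c n)" using c_meas[OF P ind dis] .
  have sm: "\<And>n. \<sigma> n \<in> borel_measurable M" using s_meas[OF P ind dis] .
  have tau: "\<tau> > 0" and T: "T > 0" and mu: "\<mu> \<ge> 0" using assms by auto
  have ne: "-\<tau> \<le> T" using tau T by simp
  note [measurable] = cm sm
  show "{\<omega> \<in> space M. (SUP t\<in>{-\<tau>..T}.
            ereal (jump_size (Yproc \<tau> \<mu> N (\<lambda>n. c n \<omega>) (\<lambda>n. \<sigma> n \<omega>)) t)) > ereal \<epsilon>} \<in> sets M" for N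
    by (rule event_measurable[where c=c and \<sigma>=\<sigma>, OF cm sm ne])
  define E where "E N = {\<omega> \<in> space M. (SUP t\<in>{-\<tau>..T}.
            ereal (jump_size (Yproc \<tau> \<mu> N (\<lambda>n. c n \<omega>) (\<lambda>n. \<sigma> n \<omega>)) t)) > ereal \<epsilon>}" for N
  have Em: "E N \<in> sets M" for N unfolding E_def by (rule event_measurable[where c=c and \<sigma>=\<sigma>, OF cm sm ne])
  define C0 where "C0 = 2 * (T + \<tau>) + 2"
  define G where "G = \<mu> * exp C0 + (\<mu> * exp C0)\<^sup>2"
  have G0: "0 \<le> G" unfolding G_def using mu by simp
  define \<delta> where "\<delta> = \<epsilon> / (4 * (G + 1))"
  have d0: "\<delta> > 0" unfolding \<delta>_def using eps G0 by simp
  define K where "K = 2 / (T + \<tau>) + 1 / \<delta> + \<tau> / \<delta>\<^sup>2"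
  define N1 where "N1 = max 1 (nat \<lceil>8 * G / \<epsilon>\<rceil>)"
  have main: "measure M (E N) \<le> K / real N" if N: "N \<ge> N1" for N
  proof -
    have N1': "N \<ge> 1" using N unfolding N1_def by simp
    then have N0: "N > 0" and NN: "real N \<ge> 1" by auto
    have NG: "8 * G \<le> \<epsilon> * real N"
    proof -
      have "8 * G / \<epsilon> \<le> real (nat \<lceil>8 * G / \<epsilon>\<rceil>)" by linarith
      also have "\<dots> \<le> real N" using N unfolding N1_def by simp
      finally show ?thesis using eps by (simp add: field_simps)
    qed
    define m1 where "m1 = nat \<lceil>2 * real N * (T + \<tau>)\<rceil> + 1"
    define d where "d = nat \<lceil>\<delta> * real N\<rceil>"
    define m2 where "m2 = Lval \<tau> N + d + 1"
    define x1 where "x1 = real N * (T + \<tau>)"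
    have x1p: "x1 > 0" unfolding x1_def using NN tau T by simp
    define B0 where "B0 = {\<omega> \<in> space M. \<not> (\<forall>i. 0 < \<sigma> i \<omega>)}"
    define B1 where "B1 = {\<omega> \<in> space M. Jt (\<lambda>n. \<sigma> n \<omega>) m1 \<le> x1}"
    define B2 where "B2 = {\<omega> \<in> space M. Jt (\<lambda>n. \<sigma> n \<omega>) m2 \<le> real N * \<tau>}"
    have B0m: "B0 \<in> sets M" unfolding B0_def by measurable
    have B1m: "B1 \<in> sets M" unfolding B1_def Jt_def by measurable
    have B2m: "B2 \<in> sets M" unfolding B2_def Jt_def by measurable
    have m1r: "2 * x1 + 1 \<le> real m1" "real m1 \<le> 2 * x1 + 2"
    proof -
      have "0 \<le> 2 * real N * (T + \<tau>)" using tau T by simp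
      then have "real (nat \<lceil>2 * real N * (T + \<tau>)\<rceil>) = real_of_int \<lceil>2 * real N * (T + \<tau>)\<rceil>" by simp
      then show "2 * x1 + 1 \<le> real m1" "real m1 \<le> 2 * x1 + 2" unfolding m1_def x1_def by linarith+
    qed
    have m1C: "real m1 / real N \<le> C0"
    proof -
      have "real m1 \<le> 2 * (T + \<tau>) * real N + 2 * real N" using m1r NN unfolding x1_def by (simp add: algebra_simps)
      then have "real m1 \<le> C0 * real N" unfolding C0_def by (simp add: algebra_simps)
      then show ?thesis using NN by (simp add: field_simps)
    qed
    have DbG: "Db \<mu> N m1 \<le> G" unfolding G_def by (rule Db_bound[OF N1' mu m1C])
    have dle: "real d \<le> \<delta> * real N + 1" "\<delta> * real N \<le> real d"
    proof -
      have "0 \<le> \<delta> * real N" using d0 by simp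
      then have "real d = real_of_int \<lceil>\<delta> * real N\<rceil>" unfolding d_def by simp
      then show "real d \<le> \<delta> * real N + 1" "\<delta> * real N \<le> real d" by linarith+
    qed
    have D0: "0 \<le> Db \<mu> N m1" using Eb_nonneg[OF N0 mu] by (simp add: Db_def[OF N0 mu])
    have jb: "Db \<mu> N m1 * (1 + real d) / real N \<le> \<epsilon> / 2"
    proof -
      have "Db \<mu> N m1 * (1 + real d) \<le> G * (2 + \<delta> * real N)"
        using DbG D0 dle by (intro mult_mono) auto
      also have "\<dots> = 2 * G + (G * \<delta>) * real N" by (simp add: algebra_simps)
      also have "G * \<delta> \<le> \<epsilon> / 4"
      proof -
        have "G * \<delta> = \<epsilon> / 4 * (G / (G + 1))" unfolding \<delta>_def using G0 by (simp add: field_simps)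
        also have "\<dots> \<le> \<epsilon> / 4 * 1" using G0 eps by (intro mult_left_mono) auto
        finally show ?thesis by simp
      qed
      then have "2 * G + (G * \<delta>) * real N \<le> 2 * G + \<epsilon> / 4 * real N" using NN by (intro add_left_mono mult_right_mono) auto
      also have "\<dots> \<le> \<epsilon> / 2 * real N" using NG by simp
      finally show ?thesis using NN by (simp add: field_simps)
    qed
    have sub: "E N \<subseteq> B0 \<union> B1 \<union> B2"
    proof
      fix \<omega> assume w: "\<omega> \<in> E N"
      show "\<omega> \<in> B0 \<union> B1 \<union> B2"
      proof (rule ccontr)
        assume nb: "\<omega> \<notin> B0 \<union> B1 \<union> B2"
        have sp: "\<omega> \<in> space M" using w unfolding E_def by auto
        have pos: "\<And>i. 0 < \<sigma> i \<omega>" using nb sp unfolding B0_def by auto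
        have m1': "real N * (T + \<tau>) < Jt (\<lambda>n. \<sigma> n \<omega>) m1" using nb sp unfolding B1_def x1_def by auto
        have m2': "real N * \<tau> < Jt (\<lambda>n. \<sigma> n \<omega>) m2" using nb sp unfolding B2_def by auto
        have "Slt (Jt (\<lambda>n. \<sigma> n \<omega>)) (real N * \<tau>) \<subseteq> {1..<m2}"
        proof
          fix k assume k: "k \<in> Slt (Jt (\<lambda>n. \<sigma> n \<omega>)) (real N * \<tau>)"
          then have k1: "1 \<le> k" and k2: "Jt (\<lambda>n. \<sigma> n \<omega>) k < real N * \<tau>" unfolding Slt_def by blast+
          have "k < m2"
          proof (rule ccontr)
            assume "\<not> k < m2"
            then have "m2 \<le> k" by simp
            then have "Jt (\<lambda>n. \<sigma> n \<omega>) m2 \<le> Jt (\<lambda>n. \<sigma> n \<omega>) k"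
              using strict_mono_less_eq[OF Jt_strict_mono[OF pos], where x=m2 and y=k] by simp
            then show False using k2 m2' by linarith
          qed
          then show "k \<in> {1..<m2}" using k1 by simp
        qed
        then have "card (Slt (Jt (\<lambda>n. \<sigma> n \<omega>)) (real N * \<tau>)) \<le> card {1..<m2}"
          by (rule card_mono[rotated]) simp
        then have cardb: "card (Slt (Jt (\<lambda>n. \<sigma> n \<omega>)) (real N * \<tau>)) \<le> Lval \<tau> N + d"
          unfolding m2_def by simp
        have jt: "jump_size (Yproc \<tau> \<mu> N (\<lambda>n. c n \<omega>) (\<lambda>n. \<sigma> n \<omega>)) t \<le> \<epsilon> / 2" if t: "t \<in> {-\<tau>..T}" for t
          using jump_bound_good[OF N0 mu tau T pos m1' cardb t, where c="\<lambda>n. c n \<omega>"] jb by linarith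
        have "(SUP t\<in>{-\<tau>..T}. ereal (jump_size (Yproc \<tau> \<mu> N (\<lambda>n. c n \<omega>) (\<lambda>n. \<sigma> n \<omega>)) t)) \<le> ereal (\<epsilon> / 2)"
          using jt by (intro SUP_least) auto
        also have "\<dots> < ereal \<epsilon>" using eps by simp
        finally show False using w unfolding E_def by auto
      qed
    qed
    have "measure M (E N) \<le> measure M (B0 \<union> B1 \<union> B2)"
      using sub B0m B1m B2m by (intro finite_measure_mono) auto
    also have "\<dots> \<le> measure M (B0 \<union> B1) + measure M B2"
      using B0m B1m B2m by (intro measure_Un_le) auto
    also have "measure M (B0 \<union> B1) \<le> measure M B0 + measure M B1"
      using B0m B1m by (intro measure_Un_le) auto
    also have "measure M B0 = 0"
    proof -
      have "AE \<omega> in M. \<omega> \<notin> B0" using s_pos_AE[OF P ind dis] unfolding B0_def by eventually_elim auto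
      then show ?thesis using B0m by (subst prob_eq_0) auto
    qed
    also have "measure M B1 \<le> 2 / (T + \<tau>) / real N"
    proof -
      have "measure M B1 \<le> real m1 / (real m1 - x1)\<^sup>2"
        unfolding B1_def using m1r x1p by (intro J_cheb[OF P ind dis]) (auto simp: m1_def)
      also have "\<dots> \<le> 1 / x1 + x1 / x1\<^sup>2"
        using x1p m1r by (intro cheb_arith) auto
      also have "\<dots> = 2 / x1" using x1p by (simp add: power2_eq_square)
      also have "\<dots> = 2 / (T + \<tau>) / real N" unfolding x1_def by simp
      finally show ?thesis .
    qed
    also have "measure M B2 \<le> (1 / \<delta> + \<tau> / \<delta>\<^sup>2) / real N"
    proof -
      have L: "real N * \<tau> - 1 \<le> real (Lval \<tau> N)"
      proof -
        have "0 \<le> \<tau> * real N" using tau by simp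
        then have "real (Lval \<tau> N) = real_of_int \<lfloor>\<tau> * real N\<rfloor>" unfolding Lval_def by simp
        then show ?thesis by (simp add: algebra_simps) linarith
      qed
      have m2r: "\<delta> * real N \<le> real m2 - real N * \<tau>" unfolding m2_def using L dle by simp
      have dN: "0 < \<delta> * real N" using d0 NN by simp
      have "measure M B2 \<le> real m2 / (real m2 - real N * \<tau>)\<^sup>2"
        unfolding B2_def using m2r dN by (intro J_cheb[OF P ind dis]) (auto simp: m2_def)
      also have "\<dots> \<le> 1 / (\<delta> * real N) + real N * \<tau> / (\<delta> * real N)\<^sup>2"
        using m2r d0 NN tau by (intro cheb_arith) auto
      also have "\<dots> = (1 / \<delta> + \<tau> / \<delta>\<^sup>2) / real N" using NN d0 by (simp add: field_simps power2_eq_square)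
      finally show ?thesis .
    qed
    finally show ?thesis unfolding K_def by (simp add: add_divide_distrib)
  qed
  have "(\<lambda>N. measure M (E N)) \<longlonglongrightarrow> 0"
  proof (rule tendsto_sandwich[of "\<lambda>_. 0" _ _ "\<lambda>N. K / real N"])
    show "\<forall>\<^sub>F n in sequentially. 0 \<le> measure M (E n)" by simp
    show "\<forall>\<^sub>F n in sequentially. measure M (E n) \<le> K / real n"
      using main unfolding eventually_sequentially by blast
    show "(\<lambda>_. 0) \<longlonglongrightarrow> (0::real)" by simp
    show "(\<lambda>N. K / real N) \<longlonglongrightarrow> 0" by (rule lim_const_over_n)
  qed
  then show "(\<lambda>N. measure M {\<omega> \<in> space M. (SUP t\<in>{-\<tau>..T}.
            ereal (jump_size (Yproc \<tau> \<mu> N (\<lambda>n. c n \<omega>) (\<lambda>n. \<sigma> n \<omega>)) t)) > ereal \<epsilon>})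
      \<longlonglongrightarrow> 0" unfolding E_def .
qed

end
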